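(* Let $C$ be a Reedy category and let $\Gamma$ be one of $\int N(C)$, $\int N^{-,+}(C)$, $\int N^{--,+}_+(C)$. Let $(\alpha,\theta)\colon([m],X)\to([n],Y)$ be a morphism in $\Gamma$. Consider the order-preserving map $\mathrm{pr}\colon\{(\beta,\varphi)\in\mathrm{Hom}_\Gamma(([m],X),([n],Y)):(\alpha,\theta)\le(\beta,\varphi)\}\to\{\beta\in\mathrm{Hom}_\Delta([m],[n]):\alpha\le\beta\}$, $(\beta,\varphi)\mapsto\beta$. Then the image of $\mathrm{pr}$ has a largest element $\alpha'$, and $\mathrm{pr}$ is an order isomorphism onto the interval $\{\beta\in\mathrm{Hom}_\Delta([m],[n]):\alpha\le\beta\le\alpha'\}$.
   Context: A Reedy category $(C,C_-,C_+)$: wide subcategories with unique factorization of every morphism as ($C_-$ then $C_+$), membership in $C_\pm$ decidable, and the relation ($x<'y$ iff non-identity $x\to y$ in $C_+$ or non-identity $y\to x$ in $C_-$) well-founded. $\Delta$: finite ordinals $[n]$ and order-preserving maps, hom-sets ordered pointwise. $\int N(C)$: objects $([n],X)$ with $X\colon[n]\to C$ a functor; morphisms $([m],X)\to([n],Y)$ are $(\alpha,\theta)$, $\alpha\colon[m]\to[n]$ in $\Delta$, $\theta\colon X\Rightarrow Y\circ\alpha$; composition $(\beta,\varphi)\circ(\alpha,\theta)=(\beta\alpha,(\varphi\alpha)\circ\theta)$. $\int N^{-,+}(C)$: subcategory of objects with $X$ sending all morphisms into $C_-$ and morphisms with all $\theta_i\in C_+$. $\int N^{--,+}_+(C)$: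 its subcategory of objects whose $X$ reflects identities and morphisms with $\alpha$ injective. Order on hom-sets: $(\alpha,\theta)\le(\alpha',\theta')$ iff $\alpha\le\alpha'$ pointwise and $\theta'_i=Y(\alpha(i)\le\alpha'(i))\circ\theta_i$ for all $i$. *)

theory Defs
  imports "HOL-Library.FuncSet"
begin

record ('o, 'a) category =
  cOb   :: "'o set"
  cAr   :: "'a set"
  cdom  :: "'a \<Rightarrow> 'o"
  ccod  :: "'a \<Rightarrow> 'o"
  cid   :: "'o \<Rightarrow> 'a"
  ccomp :: "'a \<Rightarrow> 'a \<Rightarrow> 'a"   (* ccomp C g f = g o f *)

definition chom :: "('o, 'a) category \<Rightarrow> 'o \<Rightarrow> 'o \<Rightarrow> 'a set" where
  "chom C x y = {f \<in> cAr C. cdom C f = x \<and> ccod C f = y}"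

definition is_category :: "('o, 'a) category \<Rightarrow> bool" where
  "is_category C \<longleftrightarrow>
     (\<forall>f\<in>cAr C. cdom C f \<in> cOb C \<and> ccod C f \<in> cOb C) \<and>
     (\<forall>x\<in>cOb C. cid C x \<in> chom C x x) \<and>
     (\<forall>f\<in>cAr C. \<forall>g\<in>cAr C. ccod C f = cdom C g \<longrightarrow>
         ccomp C g f \<in> chom C (cdom C f) (ccod C g)) \<and>
     (\<forall>f\<in>cAr C. ccomp C f (cid C (cdom C f)) = f \<and> ccomp C (cid C (ccod C f)) f = f) \<and>
     (\<forall>f\<in>cAr C. \<forall>g\<in>cAr C. \<forall>h\<in>cAr C. ccod C f = cdom C g \<longrightarrow> ccod C g = cdom C h \<longrightarrow>
         ccomp C h (ccomp C g f) = ccomp C (ccomp C h g) f)"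

definition wide_subcat :: "('o, 'a) category \<Rightarrow> 'a set \<Rightarrow> bool" where
  "wide_subcat C D \<longleftrightarrow> D \<subseteq> cAr C \<and> (\<forall>x\<in>cOb C. cid C x \<in> D) \<and>
     (\<forall>f\<in>D. \<forall>g\<in>D. ccod C f = cdom C g \<longrightarrow> ccomp C g f \<in> D)"

definition reedy_lt :: "('o, 'a) category \<Rightarrow> 'a set \<Rightarrow> 'a set \<Rightarrow> 'o \<Rightarrow> 'o \<Rightarrow> bool" where
  "reedy_lt C Cm Cp x y \<longleftrightarrow> x \<in> cOb C \<and> y \<in> cOb C \<and>
     ((\<exists>f \<in> Cp \<inter> chom C x y. f \<noteq> cid C x) \<or> (\<exists>f \<in> Cm \<inter> chom C y x. f \<noteq> cid C y))"

definition reedy :: "('o, 'a) category \<Rightarrow> 'a set \<Rightarrow> 'a set \<Rightarrow> bool" where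
  "reedy C Cm Cp \<longleftrightarrow> is_category C \<and> wide_subcat C Cm \<and> wide_subcat C Cp \<and>
     (\<forall>f\<in>cAr C. \<exists>!gh. fst gh \<in> Cm \<and> snd gh \<in> Cp \<and>
         cdom C (fst gh) = cdom C f \<and> ccod C (fst gh) = cdom C (snd gh) \<and>
         ccod C (snd gh) = ccod C f \<and> ccomp C (snd gh) (fst gh) = f) \<and>
     wf {(x, y). reedy_lt C Cm Cp x y}"

definition delta_hom :: "nat \<Rightarrow> nat \<Rightarrow> (nat \<Rightarrow> nat) set" where
  "delta_hom m n = {\<alpha> \<in> {0..m} \<rightarrow>\<^sub>E {0..n}. mono_on {0..m} \<alpha>}"

definition delta_le :: "nat \<Rightarrow> (nat \<Rightarrow> nat) \<Rightarrow> (nat \<Rightarrow> nat) \<Rightarrow> bool" where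
  "delta_le m \<alpha> \<beta> \<longleftrightarrow> (\<forall>i\<le>m. \<alpha> i \<le> \<beta> i)"

text \<open>A functor X : [n] -> C is given by its object map and the arrows X(i<=j).\<close>
type_synonym ('o, 'a) diagram = "(nat \<Rightarrow> 'o) \<times> (nat \<Rightarrow> nat \<Rightarrow> 'a)"

abbreviation dob :: "('o, 'a) diagram \<Rightarrow> nat \<Rightarrow> 'o" where "dob X \<equiv> fst X"
abbreviation dmor :: "('o, 'a) diagram \<Rightarrow> nat \<Rightarrow> nat \<Rightarrow> 'a" where "dmor X \<equiv> snd X"

definition nfunctor :: "('o, 'a) category \<Rightarrow> nat \<Rightarrow> ('o, 'a) diagram \<Rightarrow> bool" where
  "nfunctor C n X \<longleftrightarrow>
     dob X \<in> {0..n} \<rightarrow>\<^sub>E cOb C \<and>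
     (\<forall>i j. i \<le> j \<and> j \<le> n \<longrightarrow> dmor X i j \<in> chom C (dob X i) (dob X j)) \<and>
     (\<forall>i\<le>n. dmor X i i = cid C (dob X i)) \<and>
     (\<forall>i j k. i \<le> j \<and> j \<le> k \<and> k \<le> n \<longrightarrow> ccomp C (dmor X j k) (dmor X i j) = dmor X i k) \<and>
     (\<forall>i j. \<not> (i \<le> j \<and> j \<le> n) \<longrightarrow> dmor X i j = undefined)"

datatype gamma_kind = IntN | IntN_mp | IntN_mmp_p
  (* IntN = \<integral>N(C), IntN_mp = \<integral>N^{-,+}(C), IntN_mmp_p = \<integral>N^{--,+}_+(C) *)

definition gobj :: "gamma_kind \<Rightarrow> ('o, 'a) category \<Rightarrow> 'a set \<Rightarrow> 'a set \<Rightarrow> nat \<Rightarrow> ('o, 'a) diagram \<Rightarrow> bool" where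
  "gobj k C Cm Cp n X \<longleftrightarrow> nfunctor C n X \<and>
     (k \<noteq> IntN \<longrightarrow> (\<forall>i j. i \<le> j \<and> j \<le> n \<longrightarrow> dmor X i j \<in> Cm)) \<and>
     (k = IntN_mmp_p \<longrightarrow> (\<forall>i j. i \<le> j \<and> j \<le> n \<and> dmor X i j = cid C (dob X i) \<longrightarrow> i = j))"

definition ghom :: "gamma_kind \<Rightarrow> ('o, 'a) category \<Rightarrow> 'a set \<Rightarrow> 'a set \<Rightarrow>
    nat \<Rightarrow> ('o, 'a) diagram \<Rightarrow> nat \<Rightarrow> ('o, 'a) diagram \<Rightarrow> ((nat \<Rightarrow> nat) \<times> (nat \<Rightarrow> 'a)) set" where
  "ghom k C Cm Cp m X n Y = {(\<alpha>, \<theta>).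
     \<alpha> \<in> delta_hom m n \<and>
     \<theta> \<in> {0..m} \<rightarrow>\<^sub>E cAr C \<and>
     (\<forall>i\<le>m. \<theta> i \<in> chom C (dob X i) (dob Y (\<alpha> i))) \<and>
     (\<forall>i j. i \<le> j \<and> j \<le> m \<longrightarrow>
        ccomp C (dmor Y (\<alpha> i) (\<alpha> j)) (\<theta> i) = ccomp C (\<theta> j) (dmor X i j)) \<and>
     (k \<noteq> IntN \<longrightarrow> (\<forall>i\<le>m. \<theta> i \<in> Cp)) \<and>
     (k = IntN_mmp_p \<longrightarrow> inj_on \<alpha> {0..m})}"

definition gle :: "('o, 'a) category \<Rightarrow> nat \<Rightarrow> ('o, 'a) diagram \<Rightarrow>
    (nat \<Rightarrow> nat) \<times> (nat \<Rightarrow> 'a) \<Rightarrow> (nat \<Rightarrow> nat) \<times> (nat \<Rightarrow> 'a) \<Rightarrow> bool" where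
  "gle C m Y p q \<longleftrightarrow> delta_le m (fst p) (fst q) \<and>
     (\<forall>i\<le>m. snd q i = ccomp C (dmor Y (fst p i) (fst q i)) (snd p i))"

end

theory Submission
  imports Defs
begin

lemma chom_iff: "f \<in> chom C x y \<longleftrightarrow> f \<in> cAr C \<and> cdom C f = x \<and> ccod C f = y"
  by (simp add: chom_def)

locale reedy_loc =
  fixes C :: "('o,'a) category" and Cm Cp :: "'a set"
  assumes R: "reedy C Cm Cp"
begin

lemma cat: "is_category C" using R by (simp add: reedy_def)

lemma dc: "f \<in> cAr C \<Longrightarrow> cdom C f \<in> cOb C \<and> ccod C f \<in> cOb C"
  using cat by (simp add: is_category_def)

lemma idc: "x \<in> cOb C \<Longrightarrow> cid C x \<in> cAr C \<and> cdom C (cid C x) = x \<and> ccod C (cid C x) = x"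
  using cat by (simp add: is_category_def chom_def)

lemma compc: "f \<in> cAr C \<Longrightarrow> g \<in> cAr C \<Longrightarrow> ccod C f = cdom C g \<Longrightarrow>
   ccomp C g f \<in> cAr C \<and> cdom C (ccomp C g f) = cdom C f \<and> ccod C (ccomp C g f) = ccod C g"
  using cat by (simp add: is_category_def chom_def)

lemma idl: "f \<in> cAr C \<Longrightarrow> ccomp C (cid C (ccod C f)) f = f"
  using cat by (simp add: is_category_def)

lemma idr: "f \<in> cAr C \<Longrightarrow> ccomp C f (cid C (cdom C f)) = f"
  using cat by (simp add: is_category_def)

lemma assoc: "f \<in> cAr C \<Longrightarrow> g \<in> cAr C \<Longrightarrow> h \<in> cAr C \<Longrightarrow> ccod C f = cdom C g \<Longrightarrow> ccod C g = cdom C h \<Longrightarrow>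
   ccomp C h (ccomp C g f) = ccomp C (ccomp C h g) f"
  using cat unfolding is_category_def by blast

lemma Cm_sub: "f \<in> Cm \<Longrightarrow> f \<in> cAr C" using R by (auto simp: reedy_def wide_subcat_def)
lemma Cp_sub: "f \<in> Cp \<Longrightarrow> f \<in> cAr C" using R by (auto simp: reedy_def wide_subcat_def)
lemma Cm_id: "x \<in> cOb C \<Longrightarrow> cid C x \<in> Cm" using R by (auto simp: reedy_def wide_subcat_def)
lemma Cp_id: "x \<in> cOb C \<Longrightarrow> cid C x \<in> Cp" using R by (auto simp: reedy_def wide_subcat_def)
lemma Cm_comp: "f \<in> Cm \<Longrightarrow> g \<in> Cm \<Longrightarrow> ccod C f = cdom C g \<Longrightarrow> ccomp C g f \<in> Cm"
  using R by (auto simp: reedy_def wide_subcat_def)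
lemma Cp_comp: "f \<in> Cp \<Longrightarrow> g \<in> Cp \<Longrightarrow> ccod C f = cdom C g \<Longrightarrow> ccomp C g f \<in> Cp"
  using R by (auto simp: reedy_def wide_subcat_def)

lemma wfR: "wf {(x, y). reedy_lt C Cm Cp x y}" using R by (simp add: reedy_def)

lemma fact_ex:
  assumes "f \<in> cAr C"
  obtains q p where "q \<in> Cm" "p \<in> Cp" "cdom C q = cdom C f" "ccod C q = cdom C p"
    "ccod C p = ccod C f" "ccomp C p q = f"
proof -
  from R assms have "\<exists>!gh. fst gh \<in> Cm \<and> snd gh \<in> Cp \<and>
         cdom C (fst gh) = cdom C f \<and> ccod C (fst gh) = cdom C (snd gh) \<and>
         ccod C (snd gh) = ccod C f \<and> ccomp C (snd gh) (fst gh) = f" unfolding reedy_def by blast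
  then show ?thesis using that by blast
qed

lemma fact_uniq:
  assumes "f \<in> cAr C"
    "q1 \<in> Cm" "p1 \<in> Cp" "cdom C q1 = cdom C f" "ccod C q1 = cdom C p1"
    "ccod C p1 = ccod C f" "ccomp C p1 q1 = f"
    "q2 \<in> Cm" "p2 \<in> Cp" "cdom C q2 = cdom C f" "ccod C q2 = cdom C p2"
    "ccod C p2 = ccod C f" "ccomp C p2 q2 = f"
  shows "q1 = q2 \<and> p1 = p2"
proof -
  from R assms(1) have "\<exists>!gh. fst gh \<in> Cm \<and> snd gh \<in> Cp \<and>
         cdom C (fst gh) = cdom C f \<and> ccod C (fst gh) = cdom C (snd gh) \<and>
         ccod C (snd gh) = ccod C f \<and> ccomp C (snd gh) (fst gh) = f" unfolding reedy_def by blast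
  then have "(q1, p1) = (q2, p2)" using assms(2-) by (elim ex1E) (metis fst_conv snd_conv)
  then show ?thesis by simp
qed

lemma cancel:
  assumes "q \<in> Cm" "q' \<in> Cm" "cdom C q = x" "ccod C q = y" "cdom C q' = y" "ccod C q' = x"
    "ccomp C q' q = cid C x"
  shows "q = cid C x"
proof (rule ccontr)
  assume ne: "q \<noteq> cid C x"
  have q: "q \<in> cAr C" using assms Cm_sub by auto
  have q': "q' \<in> cAr C" using assms Cm_sub by auto
  have ob: "x \<in> cOb C" "y \<in> cOb C" using dc[OF q] assms by auto
  have r1: "reedy_lt C Cm Cp y x" unfolding reedy_lt_def using ob ne assms q
    by (auto simp: chom_def)
  show False
  proof (cases "q' = cid C y")
    case True
    then have "ccomp C q' q = q" using idl[OF q] assms by simp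
    then show False using ne assms by simp
  next
    case False
    have r2: "reedy_lt C Cm Cp x y" unfolding reedy_lt_def using ob False assms q'
      by (auto simp: chom_def)
    show False using wf_asym[OF wfR] r1 r2 by blast
  qed
qed

lemma down:
  assumes f: "f \<in> Cp" and g: "g \<in> Cm" and h: "h \<in> Cm" and fg: "ccod C f = cdom C g"
    and gh: "ccod C g = cdom C h" and hgf: "ccomp C h (ccomp C g f) \<in> Cp"
  shows "ccomp C g f \<in> Cp"
proof -
  have fA: "f \<in> cAr C" using f Cp_sub by auto
  have gA: "g \<in> cAr C" using g Cm_sub by auto
  have hA: "h \<in> cAr C" using h Cm_sub by auto
  define gf where "gf = ccomp C g f"
  have gfA: "gf \<in> cAr C" "cdom C gf = cdom C f" "ccod C gf = ccod C g"
    using compc[OF fA gA fg] gf_def by auto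
  obtain q p where qp: "q \<in> Cm" "p \<in> Cp" "cdom C q = cdom C gf" "ccod C q = cdom C p"
    "ccod C p = ccod C gf" "ccomp C p q = gf" using fact_ex[OF gfA(1)] by blast
  have qA: "q \<in> cAr C" using qp Cm_sub by auto
  have pA: "p \<in> cAr C" using qp Cp_sub by auto
  define hp where "hp = ccomp C h p"
  have hpA: "hp \<in> cAr C" "cdom C hp = cdom C p" "ccod C hp = ccod C h"
    using compc[OF pA hA] qp gfA gh hp_def by auto
  obtain q' p' where qp': "q' \<in> Cm" "p' \<in> Cp" "cdom C q' = cdom C hp" "ccod C q' = cdom C p'"
    "ccod C p' = ccod C hp" "ccomp C p' q' = hp" using fact_ex[OF hpA(1)] by blast
  have q'A: "q' \<in> cAr C" using qp' Cm_sub by auto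
  have p'A: "p' \<in> cAr C" using qp' Cp_sub by auto
  define x where "x = cdom C q"
  define F where "F = ccomp C h gf"
  have FA: "F \<in> cAr C" "cdom C F = x" "ccod C F = ccod C h"
    using compc[OF gfA(1) hA] gfA gh F_def qp x_def by auto
  have xO: "x \<in> cOb C" using dc[OF qA] x_def by auto
  have "F = ccomp C h (ccomp C p q)" using F_def qp by simp
  also have "\<dots> = ccomp C hp q" using assoc[OF qA pA hA] qp gfA gh hp_def by simp
  also have "\<dots> = ccomp C (ccomp C p' q') q" using qp' by simp
  also have "\<dots> = ccomp C p' (ccomp C q' q)" using assoc[OF qA q'A p'A] qp' hpA qp by simp
  finally have Feq: "F = ccomp C p' (ccomp C q' q)" .
  have qq: "ccomp C q' q \<in> Cm" using Cm_comp qp' qp hpA by auto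
  have qqA: "cdom C (ccomp C q' q) = x" "ccod C (ccomp C q' q) = ccod C q'"
    using compc[OF qA q'A] qp' qp hpA x_def by auto
  have FCp: "F \<in> Cp" using hgf F_def gf_def by simp
  have u: "cid C x = ccomp C q' q \<and> F = p'"
    apply (rule fact_uniq[OF FA(1)])
    using Cm_id[OF xO] FCp idc[OF xO] FA idr[OF FA(1)] qq qqA qp' hpA Feq by auto
  have "ccod C q' = x" using u qqA idc[OF xO] by metis
  moreover have "cdom C q' = ccod C q" using qp' hpA qp by simp
  ultimately have "q = cid C x"
    using cancel[OF qp(1) qp'(1) x_def[symmetric] refl] u by metis
  then have "gf = p" using qp idr[OF pA] x_def idc[OF xO] by metis
  then show ?thesis using qp gf_def by simp
qed

end

locale gsetup = reedy_loc +
  fixes k m n X Y \<alpha> \<theta>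
  assumes gX: "gobj k C Cm Cp m X" and gY: "gobj k C Cm Cp n Y"
    and hom: "(\<alpha>, \<theta>) \<in> ghom k C Cm Cp m X n Y"
begin

lemma Yf: "i \<le> j \<Longrightarrow> j \<le> n \<Longrightarrow> dmor Y i j \<in> cAr C \<and> cdom C (dmor Y i j) = dob Y i \<and> ccod C (dmor Y i j) = dob Y j"
  using gY by (simp add: gobj_def nfunctor_def chom_def)
lemma Yid: "i \<le> n \<Longrightarrow> dmor Y i i = cid C (dob Y i)"
  using gY by (simp add: gobj_def nfunctor_def)
lemma Ycomp: "i \<le> j \<Longrightarrow> j \<le> l \<Longrightarrow> l \<le> n \<Longrightarrow> ccomp C (dmor Y j l) (dmor Y i j) = dmor Y i l"
  using gY by (simp add: gobj_def nfunctor_def)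
lemma YCm: "k \<noteq> IntN \<Longrightarrow> i \<le> j \<Longrightarrow> j \<le> n \<Longrightarrow> dmor Y i j \<in> Cm"
  using gY by (simp add: gobj_def)
lemma Xf: "i \<le> j \<Longrightarrow> j \<le> m \<Longrightarrow> dmor X i j \<in> cAr C \<and> cdom C (dmor X i j) = dob X i \<and> ccod C (dmor X i j) = dob X j"
  using gX by (simp add: gobj_def nfunctor_def chom_def)
lemma XCm: "k \<noteq> IntN \<Longrightarrow> i \<le> j \<Longrightarrow> j \<le> m \<Longrightarrow> dmor X i j \<in> Cm"
  using gX by (simp add: gobj_def)
lemma Xrefl: "k = IntN_mmp_p \<Longrightarrow> i \<le> j \<Longrightarrow> j \<le> m \<Longrightarrow> dmor X i j = cid C (dob X i) \<Longrightarrow> i = j"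
  using gX by (simp add: gobj_def)
lemma XO: "i \<le> m \<Longrightarrow> dob X i \<in> cOb C"
  using gX by (auto simp: gobj_def nfunctor_def)

lemma \<alpha>dh: "\<alpha> \<in> delta_hom m n" using hom by (simp add: ghom_def)
lemma \<alpha>n: "i \<le> m \<Longrightarrow> \<alpha> i \<le> n" using \<alpha>dh by (auto simp: delta_hom_def)
lemma \<alpha>mono: "i \<le> j \<Longrightarrow> j \<le> m \<Longrightarrow> \<alpha> i \<le> \<alpha> j"
  using \<alpha>dh by (auto simp: delta_hom_def intro: mono_onD)
lemma \<theta>f: "i \<le> m \<Longrightarrow> \<theta> i \<in> cAr C \<and> cdom C (\<theta> i) = dob X i \<and> ccod C (\<theta> i) = dob Y (\<alpha> i)"
  using hom by (simp add: ghom_def chom_def)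
lemma \<theta>nat: "i \<le> j \<Longrightarrow> j \<le> m \<Longrightarrow> ccomp C (dmor Y (\<alpha> i) (\<alpha> j)) (\<theta> i) = ccomp C (\<theta> j) (dmor X i j)"
  using hom by (simp add: ghom_def)
lemma \<theta>Cp: "k \<noteq> IntN \<Longrightarrow> i \<le> m \<Longrightarrow> \<theta> i \<in> Cp"
  using hom by (simp add: ghom_def)

definition good where
  "good i b \<longleftrightarrow> \<alpha> i \<le> b \<and> b \<le> n \<and> (k \<noteq> IntN \<longrightarrow> ccomp C (dmor Y (\<alpha> i) b) (\<theta> i) \<in> Cp)"

lemma good_down:
  assumes i: "i \<le> m" and g: "good i b" and b1: "\<alpha> i \<le> b'" and b2: "b' \<le> b"
  shows "good i b'"
proof (cases "k = IntN")
  case True then show ?thesis using g b1 b2 unfolding good_def by auto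
next
  case False
  have bn: "b \<le> n" using g by (simp add: good_def)
  have e: "ccomp C (dmor Y b' b) (ccomp C (dmor Y (\<alpha> i) b') (\<theta> i)) = ccomp C (dmor Y (\<alpha> i) b) (\<theta> i)"
    using assoc[of "\<theta> i" "dmor Y (\<alpha> i) b'" "dmor Y b' b"] \<theta>f[OF i] Yf[of "\<alpha> i" b'] Yf[of b' b]
      Ycomp[of "\<alpha> i" b' b] b1 b2 bn by simp
  have "ccomp C (dmor Y (\<alpha> i) b') (\<theta> i) \<in> Cp"
    apply (rule down[OF \<theta>Cp[OF False i] YCm[OF False b1] YCm[OF False b2]])
    using \<theta>f[OF i] Yf[of "\<alpha> i" b'] Yf[of b' b] b1 b2 bn e g False by (auto simp: good_def)
  then show ?thesis using b1 b2 bn by (simp add: good_def)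
qed

lemma good_base: "i \<le> m \<Longrightarrow> good i (\<alpha> i)"
  using \<alpha>n[of i] Yid[of "\<alpha> i"] idl[of "\<theta> i"] \<theta>f[of i] \<theta>Cp[of i] by (auto simp: good_def)

definition c where "c i = Max {b. good i b}"

lemma good_fin: "finite {b. good i b}"
  by (rule finite_subset[of _ "{..n}"]) (auto simp: good_def)

lemma c_good: "i \<le> m \<Longrightarrow> good i (c i)"
  unfolding c_def using good_fin[of i] good_base[of i] Max_in[of "{b. good i b}"] by auto

lemma good_iff: "i \<le> m \<Longrightarrow> \<alpha> i \<le> b \<Longrightarrow> good i b \<longleftrightarrow> b \<le> c i"
proof
  assume "i \<le> m" "good i b" then show "b \<le> c i" unfolding c_def using good_fin[of i] by auto
next
  assume "i \<le> m" "\<alpha> i \<le> b" "b \<le> c i" then show "good i b" using good_down c_good by blast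
qed

lemma c_n: "i \<le> m \<Longrightarrow> c i \<le> n" using c_good by (simp add: good_def)
lemma \<alpha>_c: "i \<le> m \<Longrightarrow> \<alpha> i \<le> c i" using c_good by (simp add: good_def)

definition \<alpha>' where "\<alpha>' i = (if i \<le> m then Min (c ` {i..m}) else undefined)"

lemma \<alpha>'_le_c: "i \<le> j \<Longrightarrow> j \<le> m \<Longrightarrow> \<alpha>' i \<le> c j"
  unfolding \<alpha>'_def by (auto intro: Min_le)

lemma \<alpha>_le_\<alpha>': "i \<le> m \<Longrightarrow> \<alpha> i \<le> \<alpha>' i"
  unfolding \<alpha>'_def using \<alpha>mono \<alpha>_c by (auto intro!: Min.boundedI) (meson le_trans)

lemma \<alpha>'_mono: "i \<le> j \<Longrightarrow> j \<le> m \<Longrightarrow> \<alpha>' i \<le> \<alpha>' j"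
  using \<alpha>'_le_c unfolding \<alpha>'_def[of j] by (auto intro!: Min.boundedI)

lemma \<alpha>'_n: "i \<le> m \<Longrightarrow> \<alpha>' i \<le> n"
  using \<alpha>'_le_c[of i i] c_n[of i] by simp

lemma \<alpha>'_dh: "\<alpha>' \<in> delta_hom m n"
  unfolding delta_hom_def
  using \<alpha>'_n \<alpha>'_mono by (auto simp: \<alpha>'_def extensional_def intro!: mono_onI)

lemma good_all_iff:
  assumes "\<beta> \<in> delta_hom m n" "delta_le m \<alpha> \<beta>"
  shows "(\<forall>i\<le>m. good i (\<beta> i)) \<longleftrightarrow> delta_le m \<beta> \<alpha>'"
proof
  assume a: "\<forall>i\<le>m. good i (\<beta> i)"
  have mono: "\<And>i j. i \<le> j \<Longrightarrow> j \<le> m \<Longrightarrow> \<beta> i \<le> \<beta> j"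
    using assms(1) by (auto simp: delta_hom_def intro: mono_onD)
  have bc: "\<And>j. j \<le> m \<Longrightarrow> \<beta> j \<le> c j" using a good_iff assms(2) by (auto simp: delta_le_def)
  show "delta_le m \<beta> \<alpha>'" unfolding delta_le_def \<alpha>'_def
    using mono bc by (auto intro!: Min.boundedI) (meson le_trans)
next
  assume "delta_le m \<beta> \<alpha>'"
  then show "\<forall>i\<le>m. good i (\<beta> i)"
    using good_iff assms(2) \<alpha>'_le_c by (auto simp: delta_le_def intro: order_trans)
qed

end

context gsetup begin

definition phi where "phi \<beta> = restrict (\<lambda>i. ccomp C (dmor Y (\<alpha> i) (\<beta> i)) (\<theta> i)) {0..m}"

definition S where "S = {p \<in> ghom k C Cm Cp m X n Y. gle C m Y (\<alpha>, \<theta>) p}"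

context
  fixes \<beta> assumes bdh: "\<beta> \<in> delta_hom m n" and ab: "delta_le m \<alpha> \<beta>"
begin

lemma \<beta>n: "i \<le> m \<Longrightarrow> \<beta> i \<le> n" using bdh by (auto simp: delta_hom_def)
lemma \<beta>mono: "i \<le> j \<Longrightarrow> j \<le> m \<Longrightarrow> \<beta> i \<le> \<beta> j"
  using bdh by (auto simp: delta_hom_def intro: mono_onD)
lemma ab': "i \<le> m \<Longrightarrow> \<alpha> i \<le> \<beta> i" using ab by (simp add: delta_le_def)

lemma phi_f: "i \<le> m \<Longrightarrow> phi \<beta> i \<in> cAr C \<and> cdom C (phi \<beta> i) = dob X i \<and> ccod C (phi \<beta> i) = dob Y (\<beta> i)"
  using compc[of "\<theta> i" "dmor Y (\<alpha> i) (\<beta> i)"] \<theta>f[of i] Yf[of "\<alpha> i" "\<beta> i"] ab'[of i] \<beta>n[of i]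
  by (simp add: phi_def)

lemma phi_nat:
  assumes ij: "i \<le> j" "j \<le> m"
  shows "ccomp C (dmor Y (\<beta> i) (\<beta> j)) (phi \<beta> i) = ccomp C (phi \<beta> j) (dmor X i j)"
proof -
  have im: "i \<le> m" using ij by simp
  note ti = \<theta>f[OF im] and tj = \<theta>f[OF ij(2)] and Xij = Xf[OF ij]
  have o1: "\<alpha> i \<le> \<beta> i" "\<alpha> j \<le> \<beta> j" "\<beta> i \<le> \<beta> j" "\<alpha> i \<le> \<alpha> j" "\<beta> j \<le> n"
    using ab'[OF im] ab'[OF ij(2)] \<beta>mono[OF ij] \<alpha>mono[OF ij] \<beta>n[OF ij(2)] by auto
  note A = Yf[of "\<alpha> i" "\<beta> i"] and B = Yf[of "\<beta> i" "\<beta> j"] and D = Yf[of "\<alpha> i" "\<alpha> j"]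
    and E = Yf[of "\<alpha> j" "\<beta> j"]
  have "ccomp C (dmor Y (\<beta> i) (\<beta> j)) (phi \<beta> i)
      = ccomp C (dmor Y (\<beta> i) (\<beta> j)) (ccomp C (dmor Y (\<alpha> i) (\<beta> i)) (\<theta> i))"
    using im by (simp add: phi_def)
  also have "\<dots> = ccomp C (ccomp C (dmor Y (\<beta> i) (\<beta> j)) (dmor Y (\<alpha> i) (\<beta> i))) (\<theta> i)"
    using assoc ti A B o1 by simp
  also have "\<dots> = ccomp C (dmor Y (\<alpha> i) (\<beta> j)) (\<theta> i)" using Ycomp o1 by simp
  also have "\<dots> = ccomp C (ccomp C (dmor Y (\<alpha> j) (\<beta> j)) (dmor Y (\<alpha> i) (\<alpha> j))) (\<theta> i)"
    using Ycomp o1 by simp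
  also have "\<dots> = ccomp C (dmor Y (\<alpha> j) (\<beta> j)) (ccomp C (dmor Y (\<alpha> i) (\<alpha> j)) (\<theta> i))"
    using assoc ti D E o1 by simp
  also have "\<dots> = ccomp C (dmor Y (\<alpha> j) (\<beta> j)) (ccomp C (\<theta> j) (dmor X i j))"
    using \<theta>nat[OF ij] by simp
  also have "\<dots> = ccomp C (ccomp C (dmor Y (\<alpha> j) (\<beta> j)) (\<theta> j)) (dmor X i j)"
    using assoc tj E Xij o1 by simp
  also have "\<dots> = ccomp C (phi \<beta> j) (dmor X i j)" using ij by (simp add: phi_def)
  finally show ?thesis .
qed

context assumes gd: "\<forall>i\<le>m. good i (\<beta> i)"
begin

lemma phi_Cp: "k \<noteq> IntN \<Longrightarrow> i \<le> m \<Longrightarrow> phi \<beta> i \<in> Cp"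
  using gd by (simp add: phi_def good_def)

lemma \<beta>_strict:
  assumes kk: "k = IntN_mmp_p" and ij: "i < j" "j \<le> m"
  shows "\<beta> i \<noteq> \<beta> j"
proof
  assume eq: "\<beta> i = \<beta> j"
  have im: "i \<le> m" and ij': "i \<le> j" using ij by auto
  have kn: "k \<noteq> IntN" using kk by simp
  note pi = phi_f[OF im] and pj = phi_f[OF ij(2)] and Xij = Xf[OF ij' ij(2)]
  have "ccomp C (dmor Y (\<beta> i) (\<beta> j)) (phi \<beta> i) = phi \<beta> i"
    using eq Yid[OF \<beta>n[OF im]] idl[of "phi \<beta> i"] pi by simp
  then have e: "ccomp C (phi \<beta> j) (dmor X i j) = phi \<beta> i" using phi_nat[OF ij' ij(2)] by simp
  have xo: "dob X i \<in> cOb C" using XO[OF im] .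
  have "cid C (dob X i) = dmor X i j \<and> phi \<beta> i = phi \<beta> j"
    apply (rule fact_uniq[of "phi \<beta> i"])
    using pi pj Xij e eq idc[OF xo] idr[of "phi \<beta> i"] Cm_id[OF xo] XCm[OF kn ij' ij(2)]
      phi_Cp[OF kn im] phi_Cp[OF kn ij(2)] by auto
  then have "i = j" using Xrefl[OF kk ij' ij(2)] by simp
  then show False using ij by simp
qed

lemma S_intro: "(\<beta>, phi \<beta>) \<in> S"
proof -
  have inj: "k = IntN_mmp_p \<Longrightarrow> inj_on \<beta> {0..m}"
    unfolding inj_on_def
    by (metis \<beta>_strict atLeastAtMost_iff linorder_neqE_nat)
  have "phi \<beta> \<in> {0..m} \<rightarrow>\<^sub>E cAr C" using phi_f by (auto simp: phi_def)
  then show ?thesis unfolding S_def ghom_def gle_def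
    using bdh ab phi_f phi_nat phi_Cp inj by (auto simp: chom_def phi_def)
qed

end
end

lemma mem_S:
  assumes "p \<in> S"
  shows "snd p = phi (fst p) \<and> fst p \<in> delta_hom m n \<and> delta_le m \<alpha> (fst p) \<and> (\<forall>i\<le>m. good i (fst p i))"
proof -
  obtain \<beta> \<phi> where p: "p = (\<beta>, \<phi>)" by (cases p)
  have h: "(\<beta>, \<phi>) \<in> ghom k C Cm Cp m X n Y" "gle C m Y (\<alpha>, \<theta>) (\<beta>, \<phi>)" using assms p by (auto simp: S_def)
  have bdh: "\<beta> \<in> delta_hom m n" and pe: "\<phi> \<in> {0..m} \<rightarrow>\<^sub>E cAr C"
    and pcp: "k \<noteq> IntN \<longrightarrow> (\<forall>i\<le>m. \<phi> i \<in> Cp)" using h(1) by (auto simp: ghom_def)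
  have ab: "delta_le m \<alpha> \<beta>" and ph: "\<forall>i\<le>m. \<phi> i = ccomp C (dmor Y (\<alpha> i) (\<beta> i)) (\<theta> i)"
    using h(2) by (auto simp: gle_def)
  have "\<phi> = phi \<beta>"
  proof
    fix i show "\<phi> i = phi \<beta> i"
    proof (cases "i \<le> m")
      case True then show ?thesis using ph by (simp add: phi_def)
    next
      case False then show ?thesis using pe by (auto simp: phi_def PiE_def extensional_def)
    qed
  qed
  moreover have "\<forall>i\<le>m. good i (\<beta> i)"
    using ab bdh pcp ph by (auto simp: good_def delta_le_def delta_hom_def)
  ultimately show ?thesis using p bdh ab by simp
qed

end

context gsetup begin

lemma S_char: "fst ` S = {\<beta> \<in> delta_hom m n. delta_le m \<alpha> \<beta> \<and> delta_le m \<beta> \<alpha>'}"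
proof
  show "fst ` S \<subseteq> {\<beta> \<in> delta_hom m n. delta_le m \<alpha> \<beta> \<and> delta_le m \<beta> \<alpha>'}" using mem_S good_all_iff by blast
next
  show "{\<beta> \<in> delta_hom m n. delta_le m \<alpha> \<beta> \<and> delta_le m \<beta> \<alpha>'} \<subseteq> fst ` S"
  proof
    fix \<beta> assume b: "\<beta> \<in> {\<beta> \<in> delta_hom m n. delta_le m \<alpha> \<beta> \<and> delta_le m \<beta> \<alpha>'}"
    then have "(\<beta>, phi \<beta>) \<in> S" using S_intro good_all_iff by blast
    then show "\<beta> \<in> fst ` S" by force
  qed
qed

lemma main:
  "\<exists>\<alpha>'. \<alpha>' \<in> fst ` S \<and> (\<forall>\<beta> \<in> fst ` S. delta_le m \<beta> \<alpha>') \<and>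
     fst ` S = {\<beta> \<in> delta_hom m n. delta_le m \<alpha> \<beta> \<and> delta_le m \<beta> \<alpha>'} \<and>
     inj_on fst S \<and> (\<forall>p \<in> S. \<forall>q \<in> S. gle C m Y p q \<longleftrightarrow> delta_le m (fst p) (fst q))"
proof (intro exI conjI)
  have aa: "delta_le m \<alpha> \<alpha>'" using \<alpha>_le_\<alpha>' by (simp add: delta_le_def)
  show "\<alpha>' \<in> fst ` S" unfolding S_char using \<alpha>'_dh aa by (simp add: delta_le_def)
  show "\<forall>\<beta> \<in> fst ` S. delta_le m \<beta> \<alpha>'" unfolding S_char by simp
  show "fst ` S = {\<beta> \<in> delta_hom m n. delta_le m \<alpha> \<beta> \<and> delta_le m \<beta> \<alpha>'}" by (rule S_char)
  show "inj_on fst S"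
  proof
    fix p q assume "p \<in> S" "q \<in> S" "fst p = fst q"
    then show "p = q" using mem_S by (metis prod_eqI)
  qed
  show "\<forall>p \<in> S. \<forall>q \<in> S. gle C m Y p q \<longleftrightarrow> delta_le m (fst p) (fst q)"
  proof (intro ballI iffI)
    fix p q assume "p \<in> S" "q \<in> S" "gle C m Y p q"
    then show "delta_le m (fst p) (fst q)" by (simp add: gle_def)
  next
    fix p q assume pS: "p \<in> S" and qS: "q \<in> S" and le: "delta_le m (fst p) (fst q)"
    note P = mem_S[OF pS] and Q = mem_S[OF qS]
    have "snd q i = ccomp C (dmor Y (fst p i) (fst q i)) (snd p i)" if im: "i \<le> m" for i
    proof -
      have o: "\<alpha> i \<le> fst p i" "fst p i \<le> fst q i" "fst q i \<le> n"
        using P Q le im by (auto simp: delta_le_def delta_hom_def)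
      have "snd q i = ccomp C (dmor Y (\<alpha> i) (fst q i)) (\<theta> i)" using Q im by (simp add: phi_def)
      also have "\<dots> = ccomp C (ccomp C (dmor Y (fst p i) (fst q i)) (dmor Y (\<alpha> i) (fst p i))) (\<theta> i)"
        using Ycomp o by simp
      also have "\<dots> = ccomp C (dmor Y (fst p i) (fst q i)) (ccomp C (dmor Y (\<alpha> i) (fst p i)) (\<theta> i))"
        using assoc \<theta>f[OF im] Yf[of "\<alpha> i" "fst p i"] Yf[of "fst p i" "fst q i"] o by simp
      also have "\<dots> = ccomp C (dmor Y (fst p i) (fst q i)) (snd p i)" using P im by (simp add: phi_def)
      finally show ?thesis .
    qed
    then show "gle C m Y p q" using le by (simp add: gle_def)
  qed
qed

end

theorem proposition4p4:
  fixes C :: "('o, 'a) category" and Cm Cp :: "'a set" and k :: gamma_kind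
    and m n :: nat and X Y :: "('o, 'a) diagram"
    and \<alpha> :: "nat \<Rightarrow> nat" and \<theta> :: "nat \<Rightarrow> 'a"
  assumes "reedy C Cm Cp"
    and "gobj k C Cm Cp m X" and "gobj k C Cm Cp n Y"
    and "(\<alpha>, \<theta>) \<in> ghom k C Cm Cp m X n Y"
  shows "\<exists>\<alpha>'.
     \<alpha>' \<in> fst ` {p \<in> ghom k C Cm Cp m X n Y. gle C m Y (\<alpha>, \<theta>) p} \<and>
     (\<forall>\<beta> \<in> fst ` {p \<in> ghom k C Cm Cp m X n Y. gle C m Y (\<alpha>, \<theta>) p}. delta_le m \<beta> \<alpha>') \<and>
     fst ` {p \<in> ghom k C Cm Cp m X n Y. gle C m Y (\<alpha>, \<theta>) p}
        = {\<beta> \<in> delta_hom m n. delta_le m \<alpha> \<beta> \<and> delta_le m \<beta> \<alpha>'} \<and>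
     inj_on fst {p \<in> ghom k C Cm Cp m X n Y. gle C m Y (\<alpha>, \<theta>) p} \<and>
     (\<forall>p \<in> {p \<in> ghom k C Cm Cp m X n Y. gle C m Y (\<alpha>, \<theta>) p}.
      \<forall>q \<in> {p \<in> ghom k C Cm Cp m X n Y. gle C m Y (\<alpha>, \<theta>) p}.
        gle C m Y p q \<longleftrightarrow> delta_le m (fst p) (fst q))"
proof -
  interpret gsetup C Cm Cp k m n X Y \<alpha> \<theta>
    using assms by (simp add: gsetup_def gsetup_axioms_def reedy_loc_def)
  show ?thesis using main by (simp add: S_def)
qed

end
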